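(* Let $q\in\mathbb{K}$ be a primitive $\ell$-th root of unity with $\ell>1$ odd, and $d\ge0$. The maps $\varphi(n):S^{d\,(1)_q}(n)\to S^{d\ell}_q(n)$, $\varphi(n)(e^\alpha)=e^{\ell\alpha}$ for $\alpha$ a composition of $d$ into $n$ parts, define an injective natural transformation $\varphi:S^{d\,(1)_q}\to S^{d\ell}_q$ in $\mathcal{P}_q$.
   Context: Quantum polynomial functors: for $q\in\mathbb{K}^\times$, $\mathcal{H}_d$ is the Hecke algebra with generators $T_1,\dots,T_{d-1}$, relations $T_iT_j=T_jT_i$ ($|i-j|>1$), $T_iT_{i+1}T_i=T_{i+1}T_iT_{i+1}$, $(T_i-q)(T_i+q^{-1})=0$. $V_n=\mathbb{K}^n$ with basis $e_1,\dots,e_n$; $T_i$ acts on $V_n^{\otimes d}$ by $R_n$ in positions $i,i+1$, where $R_n(e_i\otimes e_j)=e_j\otimes e_i$ ($i<j$), $q\,e_i\otimes e_i$ ($i=j$), $(q-q^{-1})e_i\otimes e_j+e_j\otimes e_i$ ($i>j$). $\mathcal{P}^d_q$ is the category of $\mathbb{K}$-linear functors from the category with objects $V_n^{\otimes d}$ and $\mathcal{H}_d$-linear maps to finite-dimensional vector spaces, $F(n):=F(V_n^{\otimes d})$; $\mathcal{P}_1$ is the category of strict polynomial functors. $S^*_q(n)$ is the algebra generated by $e_1,\dots,e_n$ in degree 1 with $e_je_i=qe_ie_j$ ($i<j$); its degree-$m$ part defines the quotient functor $S^m_q$ of $I^{\otimes m}$; $e^\alpha=e_1^{\alpha_1}\cdots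 e_n^{\alpha_n}$. $S^d$ is the classical symmetric power in $\mathcal{P}_1$ ($q=1$), with monomial basis $e^\alpha$. Quantum Frobenius twist $F\mapsto F^{(1)_q}$, $\mathcal{P}^d_1\to\mathcal{P}^{d\ell}_q$: precomposition with the functor $V_n^{\otimes d\ell}\mapsto V_n^{\otimes d}$ induced by the Parshall–Wang quantum Frobenius morphism of $q$-Schur algebras, sending the weight idempotent $\xi_\alpha$ (projection onto the $\mathcal{H}_d$-submodule generated by $e_1^{\otimes\alpha_1}\otimes\cdots\otimes e_n^{\otimes\alpha_n}$) to $\xi_\beta$ if $\alpha=\ell\beta$, else $0$; as vector spaces $F^{(1)_q}(n)=F(n)$. *)

theory Defs
  imports Main
begin

text \<open>Basis vectors e_1..e_n of V_n are indexed by 0..n-1.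
  A basis vector of V_n^{tensor D} is indexed by a multi-index J, a list of length D
  with entries < n. A K-linear map f : V_n^{tensor D} -> V_m^{tensor D} is represented by
  its matrix M, where M I J is the coefficient of e_I in f(e_J).\<close>

definition tuples :: "nat \<Rightarrow> nat \<Rightarrow> nat list set" where
  "tuples n D = {J. length J = D \<and> set J \<subseteq> {..<n}}"

definition comps :: "nat \<Rightarrow> nat \<Rightarrow> nat list set" where
  "comps n d = {\<alpha>. length \<alpha> = n \<and> sum_list \<alpha> = d}"

definition swap_at :: "nat \<Rightarrow> nat list \<Rightarrow> nat list" where
  "swap_at i J = J[i := J ! Suc i, Suc i := J ! i]"

text \<open>Coefficient of e_K in T_i(e_J), where T_i acts by R_n in positions i, i+1
  (0-based positions), following the R-matrix of the paper.\<close>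
definition Tcoef :: "'k::field \<Rightarrow> nat \<Rightarrow> nat list \<Rightarrow> nat list \<Rightarrow> 'k" where
  "Tcoef q i K J =
    (let a = J ! i; b = J ! Suc i in
     if a < b then (if K = swap_at i J then 1 else 0)
     else if a = b then (if K = J then q else 0)
     else (if K = J then q - inverse q else 0) + (if K = swap_at i J then 1 else 0))"

text \<open>M is (the matrix of) an H_D-linear map V_n^{tensor D} -> V_m^{tensor D}, i.e. it
  commutes with every generator T_i.\<close>
definition hecke_linear :: "'k::field \<Rightarrow> nat \<Rightarrow> nat \<Rightarrow> nat \<Rightarrow> (nat list \<Rightarrow> nat list \<Rightarrow> 'k) \<Rightarrow> bool" where
  "hecke_linear q n m D M \<longleftrightarrow>
     (\<forall>i. Suc i < D \<longrightarrow> (\<forall>I\<in>tuples m D. \<forall>J\<in>tuples n D.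
        (\<Sum>K\<in>tuples n D. M I K * Tcoef q i K J) = (\<Sum>K\<in>tuples m D. Tcoef q i I K * M K J)))"

definition wt :: "nat \<Rightarrow> nat list \<Rightarrow> nat list" where
  "wt n J = map (\<lambda>i. count_list J i) [0..<n]"

definition sorted_idx :: "nat list \<Rightarrow> nat list" where
  "sorted_idx \<alpha> = concat (map (\<lambda>i. replicate (\<alpha> ! i) i) [0..<length \<alpha>])"

definition inversions :: "nat list \<Rightarrow> nat" where
  "inversions J = card {(a, b). a < b \<and> b < length J \<and> J ! b < J ! a}"

text \<open>Quantum symmetric power S^D_q(n) is represented in its monomial basis e^alpha,
  alpha in comps n D, i.e. vectors are functions nat list => 'k (read on comps n D).
  The quotient map V_n^{tensor D} -> S^D_q(n) sends e_J to q^(inversions J) e^(wt J),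
  since e_j e_i = q e_i e_j for i < j.  The functor S^D_q sends f to the induced map on
  quotients: S^D_q(f)(e^alpha) = pi(f(e_(sorted_idx alpha))).  For q = 1 this is the
  classical symmetric power S^D.\<close>
definition Sq_coef :: "'k::field \<Rightarrow> nat \<Rightarrow> nat \<Rightarrow> (nat list \<Rightarrow> nat list \<Rightarrow> 'k)
    \<Rightarrow> nat list \<Rightarrow> nat list \<Rightarrow> 'k" where
  "Sq_coef q m D M \<beta> \<alpha> =
     (\<Sum>I\<in>{I\<in>tuples m D. wt m I = \<beta>}. q ^ inversions I * M I (sorted_idx \<alpha>))"

definition Sq_map :: "'k::field \<Rightarrow> nat \<Rightarrow> nat \<Rightarrow> nat \<Rightarrow> (nat list \<Rightarrow> nat list \<Rightarrow> 'k)
    \<Rightarrow> (nat list \<Rightarrow> 'k) \<Rightarrow> (nat list \<Rightarrow> 'k)" where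
  "Sq_map q n m D M x = (\<lambda>\<beta>. \<Sum>\<alpha>\<in>comps n D. Sq_coef q m D M \<beta> \<alpha> * x \<alpha>)"

text \<open>Quantum Frobenius on morphisms (Parshall--Wang, dual to x_ij |-> x_ij^l on quantum
  matrix coordinate algebras): the matrix entry at (I, J) of Fr(f) is the entry of f at
  the multi-indices obtained by repeating every letter l times.\<close>
definition stretch :: "nat \<Rightarrow> nat list \<Rightarrow> nat list" where
  "stretch l J = concat (map (replicate l) J)"

definition frob :: "nat \<Rightarrow> (nat list \<Rightarrow> nat list \<Rightarrow> 'k) \<Rightarrow> (nat list \<Rightarrow> nat list \<Rightarrow> 'k)" where
  "frob l M = (\<lambda>I J. M (stretch l I) (stretch l J))"

text \<open>phi(n) : S^{d (1)_q}(n) = S^d(n) -> S^{d l}_q(n), e^alpha |-> e^{l alpha}.\<close>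
definition phi :: "nat \<Rightarrow> nat \<Rightarrow> nat \<Rightarrow> (nat list \<Rightarrow> 'k::field) \<Rightarrow> (nat list \<Rightarrow> 'k)" where
  "phi l n d x = (\<lambda>\<beta>. \<Sum>\<alpha>\<in>comps n d. if \<beta> = map (\<lambda>a. l * a) \<alpha> then x \<alpha> else 0)"

definition primitive_root :: "'k::field \<Rightarrow> nat \<Rightarrow> bool" where
  "primitive_root q l \<longleftrightarrow> q ^ l = 1 \<and> (\<forall>k. 0 < k \<and> k < l \<longrightarrow> q ^ k \<noteq> 1)"

end

theory Submission
  imports Defs "HOL-Library.Multiset"
begin


lemma finite_tuples[simp]: "finite (tuples m N)"
proof -
  have "tuples m N = {xs. set xs \<subseteq> {..<m} \<and> length xs = N}" by (auto simp: tuples_def)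
  then show ?thesis using finite_lists_length_eq[of "{..<m}" N] by simp
qed

lemma tuples_0[simp]: "tuples m 0 = {[]}" by (auto simp: tuples_def)

lemma Cons_in_tuples[simp]: "(x # B \<in> tuples m (Suc N)) \<longleftrightarrow> x < m \<and> B \<in> tuples m N"
  by (auto simp: tuples_def)

lemma sum_tuples_Suc:
  "(\<Sum>B\<in>tuples m (Suc N). h B) = (\<Sum>x<m. \<Sum>B\<in>tuples m N. h (x # B))"
proof -
  have eq: "tuples m (Suc N) = (\<lambda>(x, B). x # B) ` ({..<m} \<times> tuples m N)"
  proof
    show "tuples m (Suc N) \<subseteq> (\<lambda>(x, B). x # B) ` ({..<m} \<times> tuples m N)"
    proof
      fix C assume "C \<in> tuples m (Suc N)"
      then obtain x B where "C = x # B" by (cases C) (auto simp: tuples_def)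
      with \<open>C \<in> tuples m (Suc N)\<close> show "C \<in> (\<lambda>(x, B). x # B) ` ({..<m} \<times> tuples m N)"
        by (auto intro!: image_eqI[where x="(x,B)"])
    qed
  qed auto
  have inj: "inj_on (\<lambda>(x, B). x # B) ({..<m} \<times> tuples m N)"
    by (auto simp: inj_on_def)
  have "(\<Sum>B\<in>tuples m (Suc N). h B) = (\<Sum>(x,B)\<in>{..<m} \<times> tuples m N. h (x # B))"
    unfolding eq by (subst sum.reindex[OF inj]) (auto intro!: sum.cong)
  also have "\<dots> = (\<Sum>x<m. \<Sum>B\<in>tuples m N. h (x # B))"
    by (rule sum.cartesian_product[symmetric])
  finally show ?thesis .
qed

lemma sum_tuples_add:
  "(\<Sum>I\<in>tuples m (a + b). h I) = (\<Sum>B\<in>tuples m a. \<Sum>R\<in>tuples m b. h (B @ R))"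
proof (induction a arbitrary: h)
  case 0 then show ?case by simp
next
  case (Suc a)
  have "(\<Sum>I\<in>tuples m (Suc a + b). h I) = (\<Sum>x<m. \<Sum>I\<in>tuples m (a + b). h (x # I))"
    using sum_tuples_Suc[where m=m and N="a + b" and h=h] by simp
  also have "\<dots> = (\<Sum>x<m. \<Sum>B\<in>tuples m a. \<Sum>R\<in>tuples m b. h (x # B @ R))"
    using Suc.IH by simp
  also have "\<dots> = (\<Sum>B\<in>tuples m (Suc a). \<Sum>R\<in>tuples m b. h (B @ R))"
    using sum_tuples_Suc[where m=m and N=a and h="\<lambda>B. \<Sum>R\<in>tuples m b. h (B @ R)"] by simp
  finally show ?case .
qed

lemma length_swap_at[simp]: "length (swap_at i B) = length B"
  by (simp add: swap_at_def)

lemma swap_at_Cons_Suc[simp]: "swap_at (Suc i) (y # C) = y # swap_at i C"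
  by (simp add: swap_at_def)

lemma swap_at_0[simp]: "swap_at 0 (y # x # C) = x # y # C"
  by (simp add: swap_at_def)

lemma swap_at_append_right: "length B = k \<Longrightarrow> swap_at (k + i) (B @ R) = B @ swap_at i R"
  by (simp add: swap_at_def list_update_append nth_append)

lemma swap_at_append_left: "Suc i < length B \<Longrightarrow> swap_at i (B @ R) = swap_at i B @ R"
  by (simp add: swap_at_def list_update_append nth_append)

lemma mset_swap_at[simp]: "Suc i < length B \<Longrightarrow> mset (swap_at i B) = mset B"
  unfolding swap_at_def using mset_swap[of "Suc i" B i] by simp

lemma swap_at_in_tuples: "B \<in> tuples m N \<Longrightarrow> Suc i < N \<Longrightarrow> swap_at i B \<in> tuples m N"
proof -
  assume a: "B \<in> tuples m N" "Suc i < N"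
  have l: "length B = N" using a by (simp add: tuples_def)
  have "mset (swap_at i B) = mset B" using a(2) l by simp
  then have "set (swap_at i B) = set B" by (metis set_mset_mset)
  then show ?thesis using a by (simp add: tuples_def)
qed

lemma swap_at_nth1: "Suc i < length B \<Longrightarrow> swap_at i B ! i = B ! Suc i"
  by (simp add: swap_at_def)
lemma swap_at_nth2: "Suc i < length B \<Longrightarrow> swap_at i B ! Suc i = B ! i"
  by (simp add: swap_at_def)
lemma swap_at_swap_at: "Suc i < length B \<Longrightarrow> swap_at i (swap_at i B) = B"
proof -
  assume a: "Suc i < length B"
  have e1: "swap_at i B ! Suc i = B ! i" "swap_at i B ! i = B ! Suc i"
    using a by (simp_all only: swap_at_nth1 swap_at_nth2)
  show ?thesis
    unfolding swap_at_def[of i "swap_at i B"] e1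
    unfolding swap_at_def using a
    by (simp only: list_update_overwrite list_update_swap[of i "Suc i"] n_not_Suc_n not_False_eq_True list_update_id)
qed

lemma count_list_swap_at: "Suc i < length B \<Longrightarrow> count_list (swap_at i B) x = count_list B x"
  by (metis count_mset mset_swap_at)

lemma filter_length_swap_at: "Suc i < length B \<Longrightarrow> length (filter P (swap_at i B)) = length (filter P B)"
  by (metis mset_filter mset_swap_at size_mset)

lemma stretch_Nil[simp]: "stretch l [] = []" by (simp add: stretch_def)
lemma stretch_Cons[simp]: "stretch l (x # R) = replicate l x @ stretch l R" by (simp add: stretch_def)
lemma stretch_append: "stretch l (xs @ ys) = stretch l xs @ stretch l ys" by (simp add: stretch_def)
lemma length_stretch[simp]: "length (stretch l R) = l * length R" by (induction R) auto
lemma set_stretch: "set (stretch l R) \<subseteq> set R" by (induction R) auto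
lemma stretch_in_tuples: "R \<in> tuples m d \<Longrightarrow> stretch l R \<in> tuples m (d * l)"
  using set_stretch[of l R] by (auto simp: tuples_def)
lemma stretch_replicate: "stretch l (replicate k i) = replicate (l * k) i"
  by (induction k) (auto simp: replicate_add[symmetric])
lemma stretch_concat: "stretch l (concat xss) = concat (map (stretch l) xss)"
  by (induction xss) (auto simp: stretch_append)
lemma stretch_nth: "i < l * length R \<Longrightarrow> stretch l R ! i = R ! (i div l)"
proof (induction R arbitrary: i)
  case Nil then show ?case by simp
next
  case (Cons x R)
  show ?case
  proof (cases "i < l")
    case True then show ?thesis by (simp add: nth_append)
  next
    case False
    then have "i - l < l * length R" using Cons.prems by auto
    then have "stretch l R ! (i - l) = R ! ((i - l) div l)" by (rule Cons.IH)
    moreover have "i div l = Suc ((i - l) div l)" using False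
      using Cons.prems by (subst div_if) (cases l, auto)
    ultimately show ?thesis using False by (simp add: nth_append)
  qed
qed

lemma count_list_append': "count_list (xs @ ys) x = count_list xs x + count_list ys x"
  by (induction xs) auto
lemma count_list_replicate': "count_list (replicate k y) x = (if y = x then k else 0)"
  by (induction k) auto
lemma count_list_stretch: "count_list (stretch l R) x = l * count_list R x"
  by (induction R) (auto simp: count_list_append' count_list_replicate')
lemma wt_stretch: "wt m (stretch l R) = map (\<lambda>a. l * a) (wt m R)"
  by (simp add: wt_def count_list_stretch)



lemma inversions_Nil[simp]: "inversions [] = 0" by (simp add: inversions_def)

lemma inversions_Cons: "inversions (x # J) = length (filter (\<lambda>y. y < x) J) + inversions J"
proof -
  let ?S = "{(a, b). a < b \<and> b < length (x # J) \<and> (x # J) ! b < (x # J) ! a}"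
  let ?T = "{(a, b). a < b \<and> b < length J \<and> J ! b < J ! a}"
  let ?A = "(\<lambda>b. (0::nat, Suc b)) ` {b. b < length J \<and> J ! b < x}"
  let ?B = "(\<lambda>(a, b). (Suc a, Suc b)) ` ?T"
  have m0: "\<And>b. (0, Suc b) \<in> ?S \<longleftrightarrow> b < length J \<and> J ! b < x" by auto
  have m1: "\<And>a b. (Suc a, Suc b) \<in> ?S \<longleftrightarrow> (a, b) \<in> ?T" by auto
  have m2: "\<And>a. (a, 0) \<notin> ?S" by auto
  have a0: "\<And>b. (0, Suc b) \<in> ?A \<longleftrightarrow> b < length J \<and> J ! b < x" by auto
  have a1: "\<And>a b. (Suc a, b) \<notin> ?A" by auto
  have a2: "\<And>a. (a, 0) \<notin> ?A" by auto
  have b0: "\<And>b. (0, b) \<notin> ?B" by auto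
  have b1: "\<And>a b. (Suc a, Suc b) \<in> ?B \<longleftrightarrow> (a, b) \<in> ?T" by (auto simp: image_iff)
  have b2: "\<And>a. (a, 0) \<notin> ?B" by auto
  have eq: "?S = ?A \<union> ?B"
  proof (rule set_eqI)
    fix p :: "nat \<times> nat"
    obtain a b where p: "p = (a, b)" by (cases p)
    show "p \<in> ?S \<longleftrightarrow> p \<in> ?A \<union> ?B"
      unfolding p
    proof (cases a; cases b)
      fix a' b' assume "a = Suc a'" "b = Suc b'"
      then show "(a, b) \<in> ?S \<longleftrightarrow> (a, b) \<in> ?A \<union> ?B" using m1 a1 b1 by simp
    next
      fix b' assume "a = 0" "b = Suc b'"
      then show "(a, b) \<in> ?S \<longleftrightarrow> (a, b) \<in> ?A \<union> ?B" using m0 a0 b0 by simp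
    qed (use m2 a2 b2 in simp_all)
  qed
  have fin0: "finite ?T"
    by (rule finite_subset[of _ "{..<length J} \<times> {..<length J}"]) auto
  have "card ?S = card ?A + card ?B"
    unfolding eq by (rule card_Un_disjoint) (use fin0 in auto)
  moreover have "card ?A = length (filter (\<lambda>y. y < x) J)"
    by (subst card_image) (auto simp: inj_on_def length_filter_conv_card)
  moreover have "card ?B = card ?T"
    by (rule card_image) (auto simp: inj_on_def)
  ultimately show ?thesis unfolding inversions_def by simp
qed

lemma inversions_swap_at:
  "Suc i < length I \<Longrightarrow> I ! i < I ! Suc i \<Longrightarrow> inversions (swap_at i I) = Suc (inversions I)"
proof (induction I arbitrary: i)
  case Nil then show ?case by simp
next
  case (Cons x I)
  show ?case
  proof (cases i)
    case 0
    then obtain y I' where I: "I = y # I'" using Cons.prems by (cases I) auto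
    then show ?thesis using Cons.prems 0 by (simp add: inversions_Cons)
  next
    case (Suc j)
    then show ?thesis using Cons.prems Cons.IH[of j]
      by (simp add: inversions_Cons filter_length_swap_at)
  qed
qed

lemma inversions_rep_append:
  "inversions (replicate k x @ S) = k * length (filter (\<lambda>y. y < x) S) + inversions S"
  by (induction k) (auto simp: inversions_Cons)

lemma filter_length_stretch:
  "length (filter P (stretch l R)) = l * length (filter P R)"
  by (induction R) auto

lemma inversions_stretch_dvd: "l dvd inversions (stretch l R)"
  by (induction R) (auto simp: inversions_rep_append filter_length_stretch)



definition tsym :: "'k::field \<Rightarrow> nat \<Rightarrow> nat \<Rightarrow> (nat list \<Rightarrow> 'k) \<Rightarrow> bool" where
  "tsym t m N g \<longleftrightarrow> (\<forall>B\<in>tuples m N. \<forall>i. Suc i < N \<longrightarrow> B ! i < B ! Suc i \<longrightarrow> g (swap_at i B) = t * g B)"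

lemma tsymD: "tsym t m N g \<Longrightarrow> B \<in> tuples m N \<Longrightarrow> Suc i < N \<Longrightarrow> B ! i < B ! Suc i \<Longrightarrow> g (swap_at i B) = t * g B"
  unfolding tsym_def by blast

lemma tsym_Cons: "tsym t m (Suc N) g \<Longrightarrow> y < m \<Longrightarrow> tsym t m N (\<lambda>C. g (y # C))"
  unfolding tsym_def
proof (intro ballI allI impI)
  fix B i assume H: "\<forall>B\<in>tuples m (Suc N). \<forall>i. Suc i < Suc N \<longrightarrow> B ! i < B ! Suc i \<longrightarrow> g (swap_at i B) = t * g B"
    and y: "y < m" and B: "B \<in> tuples m N" and i: "Suc i < N" and lt: "B ! i < B ! Suc i"
  have "g (swap_at (Suc i) (y # B)) = t * g (y # B)"
    using H[rule_format, of "y # B" "Suc i"] y B i lt by simp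
  then show "g (y # swap_at i B) = t * g (y # B)" by simp
qed

lemma tsym_mult: "tsym t m N g \<Longrightarrow> (\<And>B i. B \<in> tuples m N \<Longrightarrow> Suc i < N \<Longrightarrow> c (swap_at i B) = c B)
   \<Longrightarrow> tsym t m N (\<lambda>B. c B * g B)"
  unfolding tsym_def by (auto simp: algebra_simps)

lemma insort_lemma:
  assumes "sorted B" "B \<in> tuples m N" "x < m" "tsym t m (Suc N) g"
  shows "g (x # B) = t ^ length (filter (\<lambda>y. y < x) B) * g (insort x B)"
  using assms
proof (induction B arbitrary: N g)
  case Nil then show ?case by simp
next
  case (Cons y B)
  obtain N' where N: "N = Suc N'" using Cons.prems(2) by (cases N) (auto simp: tuples_def)
  have yB: "y < m" "B \<in> tuples m N'" using Cons.prems(2) N by auto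
  show ?case
  proof (cases "x \<le> y")
    case True
    have "filter (\<lambda>z. z < x) (y # B) = []" using Cons.prems(1) True by (auto simp: filter_empty_conv)
    then show ?thesis using True by simp
  next
    case False
    have sw: "g (swap_at 0 (y # x # B)) = t * g (y # x # B)"
      using Cons.prems(4) yB Cons.prems(3) False N by (intro tsymD[where N="Suc N"]) auto
    have ts: "tsym t m (Suc N') (\<lambda>C. g (y # C))" using tsym_Cons[OF Cons.prems(4)] yB N by simp
    have IH: "g (y # x # B) = t ^ length (filter (\<lambda>z. z < x) B) * g (y # insort x B)"
      using Cons.IH[OF _ yB(2) Cons.prems(3) ts] Cons.prems(1) by simp
    show ?thesis using sw IH False by simp
  qed
qed

definition qn :: "'k::field \<Rightarrow> nat \<Rightarrow> 'k" where "qn t k = (\<Sum>i<k. t ^ i)"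
definition qf :: "'k::field \<Rightarrow> nat \<Rightarrow> 'k" where "qf t k = (\<Prod>i\<in>{1..k}. qn t i)"

lemma qn_0[simp]: "qn t 0 = 0" by (simp add: qn_def)
lemma qn_add: "qn t (a + b) = qn t a + t ^ a * qn t b"
  by (induction b) (auto simp: qn_def algebra_simps power_add)
lemma qf_0[simp]: "qf t 0 = 1" by (simp add: qf_def)
lemma qf_Suc: "qf t (Suc k) = qf t k * qn t (Suc k)"
  by (simp add: qf_def prod.nat_ivl_Suc')
lemma qn_geom: "(t - 1) * qn t k = t ^ k - 1"
  by (induction k) (auto simp: qn_def algebra_simps)

definition Fw :: "'k::field \<Rightarrow> nat \<Rightarrow> nat list \<Rightarrow> 'k" where
  "Fw t m B = (\<Prod>y<m. qf t (count (mset B) y))"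

lemma Fw_Cons: "x < m \<Longrightarrow> Fw t m (x # B) = Fw t m B * qn t (Suc (count (mset B) x))"
proof -
  assume x: "x < m"
  have "Fw t m (x # B) = (\<Prod>y<m. qf t (count (mset B) y) * (if y = x then qn t (Suc (count (mset B) x)) else 1))"
    unfolding Fw_def by (intro prod.cong) (auto simp: qf_Suc)
  also have "\<dots> = Fw t m B * qn t (Suc (count (mset B) x))"
    using x by (simp add: prod.distrib Fw_def prod.delta)
  finally show ?thesis .
qed

lemma Fw_swap: "Suc i < length B \<Longrightarrow> Fw t m (swap_at i B) = Fw t m B"
  by (simp add: Fw_def)

lemma telescope:
  fixes A :: "nat multiset" and k :: nat and t :: "'k::field"
  shows "(\<Sum>x<k. qn t (count A x) * t ^ size (filter_mset (\<lambda>y. y < x) A)) = qn t (size (filter_mset (\<lambda>y. y < k) A))"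
proof (induction k)
  case 0 then show ?case by simp
next
  case (Suc k)
  have "filter_mset (\<lambda>y. y < Suc k) A = filter_mset (\<lambda>y. y < k) A + filter_mset (\<lambda>y. y = k) A"
    by (rule multiset_eqI) auto
  then have sz: "size (filter_mset (\<lambda>y. y < Suc k) A) = size (filter_mset (\<lambda>y. y < k) A) + count A k"
    by (simp add: filter_eq_replicate_mset)
  have e: "qn t (size (filter_mset (\<lambda>y. y < Suc k) A)) = qn t (size (filter_mset (\<lambda>y. y < k) A)) + t ^ size (filter_mset (\<lambda>y. y < k) A) * qn t (count A k)"
    by (simp only: sz qn_add)
  show ?case using Suc.IH e by (simp add: mult.commute)
qed



abbreviation ST :: "nat \<Rightarrow> nat \<Rightarrow> nat list set" where
  "ST m N \<equiv> {B\<in>tuples m N. sorted B}"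

lemma finite_ST[simp]: "finite (ST m N)" by simp

lemma insort_bij:
  assumes "x < m"
  shows "bij_betw (insort x) (ST m N) {B\<in>ST m (Suc N). x \<in> set B}"
proof (rule bij_betw_byWitness[where f'="remove1 x"])
  show "\<forall>a\<in>ST m N. remove1 x (insort x a) = a" by (simp add: remove1_insort_key)
  show "\<forall>a'\<in>{B\<in>ST m (Suc N). x \<in> set B}. insort x (remove1 x a') = a'"
    by (simp add: insort_remove1)
  show "insort x ` ST m N \<subseteq> {B\<in>ST m (Suc N). x \<in> set B}"
    using assms by (auto simp: tuples_def sorted_insort set_insort_key length_insort)
  show "remove1 x ` {B\<in>ST m (Suc N). x \<in> set B} \<subseteq> ST m N"
  proof
    fix B' assume "B' \<in> remove1 x ` {B\<in>ST m (Suc N). x \<in> set B}"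
    then obtain B where B: "B \<in> ST m (Suc N)" "x \<in> set B" and B': "B' = remove1 x B" by auto
    have "length B' = N" using B B' by (simp add: tuples_def length_remove1)
    moreover have "set B' \<subseteq> {..<m}" using B B' set_remove1_subset[of x B] by (auto simp: tuples_def)
    moreover have "sorted B'" using B B' by (simp add: sorted_remove1)
    ultimately show "B' \<in> ST m N" by (simp add: tuples_def)
  qed
qed

lemma PN:
  fixes t :: "'k::field"
  assumes "tsym t m N g"
  shows "(\<Sum>B\<in>tuples m N. Fw t m B * g B) = qf t N * (\<Sum>B\<in>ST m N. g B)"
  using assms
proof (induction N arbitrary: g)
  case 0
  have "ST m 0 = {[]}" by auto
  then show ?case by (simp add: Fw_def)
next
  case (Suc N)
  define phi where "phi x B = qn t (count (mset B) x) * t ^ size (filter_mset (\<lambda>y. y < x) (mset B)) * g B" for x B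
  have step: "(\<Sum>B\<in>tuples m N. Fw t m B * (qn t (Suc (count (mset B) x)) * g (x # B)))
      = qf t N * (\<Sum>B\<in>ST m (Suc N). phi x B)" if x: "x < m" for x
  proof -
    have ts: "tsym t m N (\<lambda>B. qn t (Suc (count (mset B) x)) * g (x # B))"
      by (rule tsym_mult[OF tsym_Cons[OF Suc.prems x]]) (auto simp: tuples_def)
    have "(\<Sum>B\<in>tuples m N. Fw t m B * (qn t (Suc (count (mset B) x)) * g (x # B)))
        = qf t N * (\<Sum>B\<in>ST m N. qn t (Suc (count (mset B) x)) * g (x # B))"
      using Suc.IH[OF ts] .
    also have "(\<Sum>B\<in>ST m N. qn t (Suc (count (mset B) x)) * g (x # B)) = (\<Sum>B\<in>ST m N. phi x (insort x B))"
    proof (rule sum.cong)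
      fix B assume B: "B \<in> ST m N"
      have "g (x # B) = t ^ length (filter (\<lambda>y. y < x) B) * g (insort x B)"
        using B x Suc.prems by (intro insort_lemma) auto
      moreover have "size (filter_mset (\<lambda>y. y < x) (mset B)) = length (filter (\<lambda>y. y < x) B)"
        by (metis mset_filter size_mset)
      ultimately show "qn t (Suc (count (mset B) x)) * g (x # B) = phi x (insort x B)"
        by (simp add: phi_def)
    qed simp
    also have "\<dots> = (\<Sum>B\<in>{B\<in>ST m (Suc N). x \<in> set B}. phi x B)"
      by (rule sum.reindex_bij_betw[OF insort_bij[OF x]])
    also have "\<dots> = (\<Sum>B\<in>ST m (Suc N). phi x B)"
    proof (rule sum.mono_neutral_left)
      show "\<forall>B\<in>ST m (Suc N) - {B\<in>ST m (Suc N). x \<in> set B}. phi x B = 0"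
      proof
        fix B assume "B \<in> ST m (Suc N) - {B\<in>ST m (Suc N). x \<in> set B}"
        then have "x \<notin> set B" by simp
        then have "count (mset B) x = 0" by (simp add: count_mset count_list_0_iff)
        then show "phi x B = 0" unfolding phi_def by (simp only: qn_0 mult_zero_left)
      qed
    qed auto
    finally show ?thesis .
  qed
  have "(\<Sum>B\<in>tuples m (Suc N). Fw t m B * g B)
      = (\<Sum>x<m. \<Sum>B\<in>tuples m N. Fw t m B * (qn t (Suc (count (mset B) x)) * g (x # B)))"
    by (subst sum_tuples_Suc) (intro sum.cong refl, simp add: Fw_Cons)
  also have "\<dots> = (\<Sum>x<m. qf t N * (\<Sum>B\<in>ST m (Suc N). phi x B))"
    using step by simp
  also have "\<dots> = qf t N * (\<Sum>B\<in>ST m (Suc N). \<Sum>x<m. phi x B)"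
    by (simp add: sum_distrib_left sum.swap[of _ "{..<m}"])
  also have "(\<Sum>B\<in>ST m (Suc N). \<Sum>x<m. phi x B) = (\<Sum>B\<in>ST m (Suc N). qn t (Suc N) * g B)"
  proof (rule sum.cong)
    fix B assume B: "B \<in> ST m (Suc N)"
    have "(\<Sum>x<m. phi x B) = (\<Sum>x<m. qn t (count (mset B) x) * t ^ size (filter_mset (\<lambda>y. y < x) (mset B))) * g B"
      by (simp add: phi_def sum_distrib_right)
    also have "\<dots> = qn t (size (filter_mset (\<lambda>y. y < m) (mset B))) * g B"
      by (simp add: telescope)
    also have "filter_mset (\<lambda>y. y < m) (mset B) = mset B"
      using B by (auto simp: tuples_def filter_mset_eq_conv)
    finally show "(\<Sum>x<m. phi x B) = qn t (Suc N) * g B" using B by (simp add: tuples_def)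
  qed simp
  finally show ?case by (simp add: qf_Suc sum_distrib_left algebra_simps)
qed



lemma count_list_le_length: "count_list xs y \<le> length xs"
  by (induction xs) auto

lemma count_list_full: "count_list xs y = length xs \<Longrightarrow> \<forall>z\<in>set xs. z = y"
proof (induction xs)
  case Nil then show ?case by simp
next
  case (Cons a xs)
  then show ?case using count_list_le_length[of xs y] by (auto split: if_splits)
qed

lemma block_lemma:
  fixes t :: "'k::field"
  assumes tl: "t ^ l = 1" and tk: "\<forall>k. 0 < k \<and> k < l \<longrightarrow> t ^ k \<noteq> 1" and l: "1 < l"
    and g: "tsym t m l g"
  shows "(\<Sum>B\<in>tuples m l. g B) = (\<Sum>j<m. g (replicate l j))"
proof -
  have t1: "t \<noteq> 1" using tk l by (metis power_one_right zero_less_one)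
  have qn0: "qn t k = 0 \<longleftrightarrow> t ^ k = 1" for k
  proof -
    have "(t - 1) * qn t k = t ^ k - 1" by (rule qn_geom)
    then show ?thesis using t1 by auto
  qed
  have qf0: "qf t k = 0 \<longleftrightarrow> l \<le> k" for k
  proof
    assume "qf t k = 0"
    then obtain i where "i \<in> {1..k}" "qn t i = 0" unfolding qf_def by (auto simp: prod_zero_iff)
    then show "l \<le> k" using tk qn0 by (metis atLeastAtMost_iff leI le_trans less_le_trans zero_less_one)
  next
    assume "l \<le> k"
    then have "l \<in> {1..k}" using l by auto
    moreover have "qn t l = 0" using qn0 tl by simp
    ultimately show "qf t k = 0" unfolding qf_def by (auto simp: prod_zero_iff)
  qed
  have Fw0: "Fw t m B = 0 \<longleftrightarrow> (\<exists>j<m. B = replicate l j)" if B: "B \<in> tuples m l" for B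
  proof
    assume "Fw t m B = 0"
    then obtain j where j: "j < m" "l \<le> count (mset B) j" unfolding Fw_def by (auto simp: prod_zero_iff qf0)
    have "count_list B j = length B"
      using j B count_list_le_length[of B j] by (auto simp: tuples_def count_mset)
    then have "\<forall>z\<in>set B. z = j" by (rule count_list_full)
    then have "B = replicate l j" using B replicate_length_same[of B j] by (auto simp: tuples_def)
    then show "\<exists>j<m. B = replicate l j" using j by auto
  next
    assume "\<exists>j<m. B = replicate l j"
    then obtain j where j: "j < m" "B = replicate l j" by auto
    then have "qf t (count (mset B) j) = 0" using qf0 by simp
    then show "Fw t m B = 0" unfolding Fw_def using j by (auto simp: prod_zero_iff)
  qed
  define g' where "g' B = (if Fw t m B = 0 then 0 else g B / Fw t m B)" for B
  have ts: "tsym t m l g'"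
    unfolding tsym_def
  proof (intro ballI allI impI)
    fix B i assume B: "B \<in> tuples m l" and i: "Suc i < l" and lt: "B ! i < B ! Suc i"
    have "length B = l" using B by (simp add: tuples_def)
    then have "Fw t m (swap_at i B) = Fw t m B" using i by (simp add: Fw_swap)
    moreover have "g (swap_at i B) = t * g B" using tsymD[OF g B i lt] .
    ultimately show "g' (swap_at i B) = t * g' B" by (simp add: g'_def)
  qed
  have "(\<Sum>B\<in>tuples m l. Fw t m B * g' B) = qf t l * (\<Sum>B\<in>ST m l. g' B)" by (rule PN[OF ts])
  also have "qf t l = 0" using qf0 by simp
  finally have z: "(\<Sum>B\<in>tuples m l. if Fw t m B = 0 then 0 else g B) = 0"
    by (simp add: g'_def if_distrib cong: if_cong)
  have "(\<Sum>B\<in>tuples m l. g B) = (\<Sum>B\<in>tuples m l. if Fw t m B = 0 then g B else 0) + (\<Sum>B\<in>tuples m l. if Fw t m B = 0 then 0 else g B)"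
    by (simp add: sum.distrib[symmetric] if_distrib cong: if_cong)
  also have "\<dots> = (\<Sum>B\<in>{B\<in>tuples m l. Fw t m B = 0}. g B)"
    using z by (simp add: sum.inter_filter)
  also have "{B\<in>tuples m l. Fw t m B = 0} = (\<lambda>j. replicate l j) ` {..<m}"
  proof
    show "{B\<in>tuples m l. Fw t m B = 0} \<subseteq> (\<lambda>j. replicate l j) ` {..<m}"
      using Fw0 by blast
    show "(\<lambda>j. replicate l j) ` {..<m} \<subseteq> {B\<in>tuples m l. Fw t m B = 0}"
    proof
      fix B assume "B \<in> (\<lambda>j. replicate l j) ` {..<m}"
      then obtain j where j: "j < m" "B = replicate l j" by auto
      then have B: "B \<in> tuples m l" by (auto simp: tuples_def)
      then show "B \<in> {B\<in>tuples m l. Fw t m B = 0}" using Fw0[OF B] j by auto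
    qed
  qed
  also have "(\<Sum>B\<in>(\<lambda>j. replicate l j) ` {..<m}. g B) = (\<Sum>j<m. g (replicate l j))"
    using l by (subst sum.reindex) (auto simp: inj_on_def)
  finally show ?thesis .
qed

definition bsym :: "'k::field \<Rightarrow> nat \<Rightarrow> nat \<Rightarrow> nat \<Rightarrow> (nat list \<Rightarrow> 'k) \<Rightarrow> bool" where
  "bsym t l m D f \<longleftrightarrow> (\<forall>I\<in>tuples m D. \<forall>i. Suc i < D \<longrightarrow> Suc i mod l \<noteq> 0 \<longrightarrow> I ! i < I ! Suc i \<longrightarrow> f (swap_at i I) = t * f I)"

lemma key_lemma:
  fixes t :: "'k::field"
  assumes tl: "t ^ l = 1" and tk: "\<forall>k. 0 < k \<and> k < l \<longrightarrow> t ^ k \<noteq> 1" and l: "1 < l"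
    and f: "bsym t l m (d * l) f"
  shows "(\<Sum>I\<in>tuples m (d * l). f I) = (\<Sum>I\<in>tuples m d. f (stretch l I))"
  using f
proof (induction d arbitrary: f)
  case 0 then show ?case by simp
next
  case (Suc d)
  have "(\<Sum>I\<in>tuples m (Suc d * l). f I) = (\<Sum>B\<in>tuples m l. \<Sum>R\<in>tuples m (d * l). f (B @ R))"
    using sum_tuples_add[of f m l "d * l"] by simp
  also have "\<dots> = (\<Sum>B\<in>tuples m l. \<Sum>R\<in>tuples m d. f (B @ stretch l R))"
  proof (rule sum.cong[OF refl])
    fix B assume B: "B \<in> tuples m l"
    have "bsym t l m (d * l) (\<lambda>R. f (B @ R))"
      unfolding bsym_def
    proof (intro ballI allI impI)
      fix R i assume R: "R \<in> tuples m (d * l)" and i: "Suc i < d * l" and md: "Suc i mod l \<noteq> 0"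
        and lt: "R ! i < R ! Suc i"
      have lB: "length B = l" using B by (simp add: tuples_def)
      have BR: "B @ R \<in> tuples m (Suc d * l)" using B R by (auto simp: tuples_def)
      have m1: "Suc (l + i) mod l \<noteq> 0" using md by (metis add_Suc_right mod_add_self1)
      have m2: "(B @ R) ! (l + i) < (B @ R) ! Suc (l + i)" using lt lB by (simp add: nth_append)
      have m3: "Suc (l + i) < Suc d * l" using i by simp
      have "f (swap_at (l + i) (B @ R)) = t * f (B @ R)"
        using Suc.prems[unfolded bsym_def, rule_format, OF BR m3 m1 m2] .
      then show "f (B @ swap_at i R) = t * f (B @ R)"
        using swap_at_append_right[OF lB] by simp
    qed
    then show "(\<Sum>R\<in>tuples m (d * l). f (B @ R)) = (\<Sum>R\<in>tuples m d. f (B @ stretch l R))"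
      by (rule Suc.IH)
  qed
  also have "\<dots> = (\<Sum>R\<in>tuples m d. \<Sum>B\<in>tuples m l. f (B @ stretch l R))"
    by (rule sum.swap)
  also have "\<dots> = (\<Sum>R\<in>tuples m d. \<Sum>j<m. f (replicate l j @ stretch l R))"
  proof (rule sum.cong[OF refl])
    fix R assume R: "R \<in> tuples m d"
    have S: "stretch l R \<in> tuples m (d * l)" using stretch_in_tuples[OF R] .
    have "tsym t m l (\<lambda>B. f (B @ stretch l R))"
      unfolding tsym_def
    proof (intro ballI allI impI)
      fix B i assume B: "B \<in> tuples m l" and i: "Suc i < l" and lt: "B ! i < B ! Suc i"
      have lB: "length B = l" using B by (simp add: tuples_def)
      have BR: "B @ stretch l R \<in> tuples m (Suc d * l)" using B S by (auto simp: tuples_def)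
      have m1: "Suc i mod l \<noteq> 0" using i by simp
      have m2: "(B @ stretch l R) ! i < (B @ stretch l R) ! Suc i" using lt lB i by (simp add: nth_append)
      have m3: "Suc i < Suc d * l" using i by simp
      have "f (swap_at i (B @ stretch l R)) = t * f (B @ stretch l R)"
        using Suc.prems[unfolded bsym_def, rule_format, OF BR m3 m1 m2] .
      then show "f (swap_at i B @ stretch l R) = t * f (B @ stretch l R)"
        using swap_at_append_left[of i B] i lB by simp
    qed
    then show "(\<Sum>B\<in>tuples m l. f (B @ stretch l R)) = (\<Sum>j<m. f (replicate l j @ stretch l R))"
      by (rule block_lemma[OF tl tk l])
  qed
  also have "\<dots> = (\<Sum>I\<in>tuples m (Suc d). f (stretch l I))"
    by (subst sum_tuples_Suc) (simp add: sum.swap[of _ "{..<m}"])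
  finally show ?case .
qed



lemma Tcoef_diag: "J ! i = J ! Suc i \<Longrightarrow> Tcoef q i K J = (if K = J then q else 0)"
  by (simp add: Tcoef_def Let_def)

lemma Tcoef_asc:
  assumes "Suc i < length I" "length K = length I" "I ! i < I ! Suc i"
  shows "Tcoef q i I K = (if K = swap_at i I then 1 else 0)"
proof -
  have iff: "I = swap_at i K \<longleftrightarrow> K = swap_at i I"
    using assms swap_at_swap_at by (metis length_swap_at)
  show ?thesis
  proof (cases "K = swap_at i I")
    case True
    then have "K ! i = I ! Suc i" "K ! Suc i = I ! i" using assms by (simp_all add: swap_at_nth1 swap_at_nth2)
    then show ?thesis using True assms iff by (auto simp: Tcoef_def Let_def)
  next
    case False
    then have "I \<noteq> swap_at i K" using iff by simp
    then show ?thesis using False assms by (auto simp: Tcoef_def Let_def)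
  qed
qed

lemma hecke_col:
  assumes H: "hecke_linear q n m D M" and i: "Suc i < D" and I: "I \<in> tuples m D" and J: "J \<in> tuples n D"
    and Jeq: "J ! i = J ! Suc i" and lt: "I ! i < I ! Suc i"
  shows "M (swap_at i I) J = q * M I J"
proof -
  have e: "(\<Sum>K\<in>tuples n D. M I K * Tcoef q i K J) = (\<Sum>K\<in>tuples m D. Tcoef q i I K * M K J)"
    using H i I J unfolding hecke_linear_def by blast
  have "(\<Sum>K\<in>tuples n D. M I K * Tcoef q i K J) = (\<Sum>K\<in>tuples n D. if K = J then M I J * q else 0)"
    by (rule sum.cong) (auto simp: Tcoef_diag[OF Jeq])
  also have "\<dots> = M I J * q" using J by simp
  finally have l: "(\<Sum>K\<in>tuples n D. M I K * Tcoef q i K J) = M I J * q" .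
  have lI: "length I = D" using I by (simp add: tuples_def)
  have "(\<Sum>K\<in>tuples m D. Tcoef q i I K * M K J) = (\<Sum>K\<in>tuples m D. if K = swap_at i I then M (swap_at i I) J else 0)"
    by (rule sum.cong) (auto simp: Tcoef_asc lI i lt tuples_def)
  also have "\<dots> = M (swap_at i I) J" using swap_at_in_tuples[OF I i] by simp
  finally show ?thesis using e l by (simp add: mult.commute)
qed

lemma sorted_idx_stretch: "stretch l (sorted_idx \<alpha>) = sorted_idx (map (\<lambda>a. l * a) \<alpha>)"
  unfolding sorted_idx_def stretch_concat
  by (auto simp: stretch_replicate intro!: arg_cong[where f=concat] map_cong)

lemma length_sorted_idx: "length (sorted_idx \<alpha>) = sum_list \<alpha>"
proof -
  have "length (sorted_idx \<alpha>) = sum_list (map (\<lambda>i. \<alpha> ! i) [0..<length \<alpha>])"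
    by (simp add: sorted_idx_def length_concat comp_def)
  also have "map (\<lambda>i. \<alpha> ! i) [0..<length \<alpha>] = \<alpha>" by (rule map_nth)
  finally show ?thesis .
qed

lemma sorted_idx_tuples: "\<alpha> \<in> comps n d \<Longrightarrow> sorted_idx \<alpha> \<in> tuples n d"
proof -
  assume a: "\<alpha> \<in> comps n d"
  have "length (sorted_idx \<alpha>) = d" using a by (simp add: comps_def length_sorted_idx)
  moreover have "set (sorted_idx \<alpha>) \<subseteq> {..<n}" using a by (auto simp: comps_def sorted_idx_def)
  ultimately show ?thesis by (simp add: tuples_def)
qed

lemma finite_comps[simp]: "finite (comps n d)"
proof (rule finite_subset)
  show "comps n d \<subseteq> {xs. set xs \<subseteq> {..d} \<and> length xs = n}"
    by (auto simp: comps_def member_le_sum_list)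
  show "finite {xs. set xs \<subseteq> {..d} \<and> length xs = n}" by (rule finite_lists_length_eq) simp
qed

lemma sum_count_list: fixes I :: "nat list" shows "set I \<subseteq> {..<m} \<Longrightarrow> (\<Sum>y<m. count_list I y) = length I"
proof (induction I)
  case Nil then show ?case by simp
next
  case (Cons x I)
  have "(\<Sum>y<m. count_list (x # I) y) = (\<Sum>y<m. count_list I y + (if x = y then 1 else 0))"
    by (intro sum.cong) auto
  also have "\<dots> = (\<Sum>y<m. count_list I y) + (\<Sum>y<m. if x = y then 1 else 0)"
    by (rule sum.distrib)
  also have "(\<Sum>y<m. if x = y then 1 else 0) = (1::nat)"
    using Cons.prems by (subst sum.delta') auto
  also have "(\<Sum>y<m. count_list I y) = length I" using Cons by simp
  finally show ?case by simp
qed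

lemma wt_comps: "I \<in> tuples m d \<Longrightarrow> wt m I \<in> comps m d"
proof -
  assume I: "I \<in> tuples m d"
  have "sum_list (map (count_list I) [0..<m]) = (\<Sum>y\<in>set [0..<m]. count_list I y)"
    by (rule sum_set_upt_conv_sum_list_nat[symmetric])
  also have "\<dots> = (\<Sum>y<m. count_list I y)" by (simp add: atLeast0LessThan)
  also have "\<dots> = d" using I by (simp add: sum_count_list tuples_def)
  finally show ?thesis by (simp add: wt_def comps_def)
qed

lemma map_mult_comps: "\<alpha> \<in> comps n d \<Longrightarrow> map (\<lambda>a. l * a) \<alpha> \<in> comps n (d * l)"
  by (auto simp: comps_def sum_list_const_mult)



lemma prim_sq:
  fixes q :: "'k::field"
  assumes "primitive_root q l" "odd l"
  shows "(q^2) ^ l = 1" "\<forall>k. 0 < k \<and> k < l \<longrightarrow> (q^2) ^ k \<noteq> 1"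
proof -
  have ql: "q ^ l = 1" and qk: "\<And>k. 0 < k \<Longrightarrow> k < l \<Longrightarrow> q ^ k \<noteq> 1"
    using assms(1) unfolding primitive_root_def by auto
  show "(q^2) ^ l = 1" by (metis ql power_mult power_mult_distrib power_one mult.commute)
  show "\<forall>k. 0 < k \<and> k < l \<longrightarrow> (q^2) ^ k \<noteq> 1"
  proof (intro allI impI notI)
    fix k assume k: "0 < k \<and> k < l" and e: "(q^2) ^ k = 1"
    have l0: "0 < l" using k by simp
    have "q ^ (2 * k) = 1" using e by (simp add: power_mult)
    moreover have "q ^ (2 * k) = q ^ ((2 * k) mod l)"
    proof -
      have "q ^ (2 * k) = q ^ (l * ((2 * k) div l) + (2 * k) mod l)" by simp
      also have "\<dots> = (q ^ l) ^ ((2 * k) div l) * q ^ ((2 * k) mod l)" by (simp only: power_add power_mult)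
      finally show ?thesis using ql by simp
    qed
    ultimately have "q ^ ((2 * k) mod l) = 1" by simp
    then have "(2 * k) mod l = 0" using qk[of "(2 * k) mod l"] l0 by (metis mod_less_divisor neq0_conv)
    then have "l dvd 2 * k" by (simp add: mod_eq_0_iff_dvd)
    moreover have "coprime l 2" using assms(2) by simp
    ultimately have "l dvd k" using coprime_dvd_mult_right_iff by blast
    then show False using k by (simp add: nat_dvd_not_less)
  qed
qed

lemma sq_coef_eq:
  fixes q :: "'k::field"
  assumes prim: "primitive_root q l" and odd: "odd l" and l: "1 < l"
    and H: "hecke_linear q n m (d * l) M" and \<alpha>: "\<alpha> \<in> comps n d"
  shows "Sq_coef q m (d * l) M \<beta> (map (\<lambda>a. l * a) \<alpha>)
       = (\<Sum>I\<in>tuples m d. if map (\<lambda>a. l * a) (wt m I) = \<beta> then M (stretch l I) (stretch l (sorted_idx \<alpha>)) else 0)"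
proof -
  define S where "S = sorted_idx \<alpha>"
  define J where "J = stretch l S"
  have S: "S \<in> tuples n d" using sorted_idx_tuples[OF \<alpha>] by (simp add: S_def)
  have J: "J \<in> tuples n (d * l)" using stretch_in_tuples[OF S] by (simp add: J_def)
  have lS: "length S = d" using S by (simp add: tuples_def)
  have Jeq: "J ! i = J ! Suc i" if "Suc i < d * l" "Suc i mod l \<noteq> 0" for i
  proof -
    have "J ! i = S ! (i div l)" using that lS by (simp add: J_def stretch_nth mult.commute)
    moreover have "J ! Suc i = S ! (Suc i div l)" using that lS by (simp add: J_def stretch_nth mult.commute)
    moreover have "Suc i div l = i div l" using that(2) by (simp add: div_Suc)
    ultimately show ?thesis by simp
  qed
  define f where "f I = (if wt m I = \<beta> then q ^ inversions I * M I J else 0)" for I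
  have bs: "bsym (q^2) l m (d * l) f"
    unfolding bsym_def
  proof (intro ballI allI impI)
    fix I i assume I: "I \<in> tuples m (d * l)" and i: "Suc i < d * l" and md: "Suc i mod l \<noteq> 0"
      and lt: "I ! i < I ! Suc i"
    have lI: "length I = d * l" using I by (simp add: tuples_def)
    have w: "wt m (swap_at i I) = wt m I" using i lI by (simp add: wt_def count_list_swap_at)
    have inv: "inversions (swap_at i I) = Suc (inversions I)" using inversions_swap_at i lI lt by simp
    have Mq: "M (swap_at i I) J = q * M I J" by (rule hecke_col[OF H i I J Jeq[OF i md] lt])
    show "f (swap_at i I) = q^2 * f I"
      unfolding f_def w inv Mq by (simp add: power2_eq_square algebra_simps)
  qed
  have key: "(\<Sum>I\<in>tuples m (d * l). f I) = (\<Sum>I\<in>tuples m d. f (stretch l I))"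
    using key_lemma[OF prim_sq[OF prim odd] l bs] .
  have "Sq_coef q m (d * l) M \<beta> (map (\<lambda>a. l * a) \<alpha>) = (\<Sum>I\<in>tuples m (d * l). f I)"
    unfolding Sq_coef_def f_def J_def S_def sorted_idx_stretch
    by (simp add: sum.inter_filter)
  also have "\<dots> = (\<Sum>I\<in>tuples m d. f (stretch l I))" by (rule key)
  also have "\<dots> = (\<Sum>I\<in>tuples m d. if map (\<lambda>a. l * a) (wt m I) = \<beta> then M (stretch l I) J else 0)"
  proof (rule sum.cong[OF refl])
    fix I
    obtain k where k: "inversions (stretch l I) = l * k" using inversions_stretch_dvd[of l I] by (auto elim: dvdE)
    have "q ^ inversions (stretch l I) = 1"
      using prim unfolding primitive_root_def by (simp add: k power_mult)
    then show "f (stretch l I) = (if map (\<lambda>a. l * a) (wt m I) = \<beta> then M (stretch l I) J else 0)"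
      by (simp add: f_def wt_stretch)
  qed
  finally show ?thesis unfolding J_def S_def .
qed



theorem proposition4p2:
  fixes q :: "'k::field" and l d :: nat
  assumes "primitive_root q l" and "l > 1" and "odd l"
  shows "(\<forall>n m M. hecke_linear q n m (d * l) M \<longrightarrow>
            (\<forall>x. phi l m d (Sq_map 1 n m d (frob l M) x) =
                 Sq_map q n m (d * l) M (phi l n d x)))
       \<and> (\<forall>n. inj_on (phi l n d :: (nat list \<Rightarrow> 'k) \<Rightarrow> _) {x. \<forall>\<alpha>. \<alpha> \<notin> comps n d \<longrightarrow> x \<alpha> = 0})"
proof (intro conjI allI impI)
  fix n m M and x :: "nat list \<Rightarrow> 'k"
  assume H: "hecke_linear q n m (d * l) M"
  show "phi l m d (Sq_map 1 n m d (frob l M) x) = Sq_map q n m (d * l) M (phi l n d x)"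
  proof (rule ext)
    fix \<beta>
    define h where "h \<alpha> I = M (stretch l I) (stretch l (sorted_idx \<alpha>))" for \<alpha> I
    define G where "G \<alpha>' \<alpha> = (\<Sum>I\<in>{I\<in>tuples m d. wt m I = \<alpha>'}. if map (\<lambda>a. l * a) (wt m I) = \<beta> then h \<alpha> I else 0)" for \<alpha>' \<alpha>
    have step1: "(if \<beta> = map (\<lambda>a. l * a) \<alpha>' then Sq_map 1 n m d (frob l M) x \<alpha>' else 0)
        = (\<Sum>\<alpha>\<in>comps n d. x \<alpha> * G \<alpha>' \<alpha>)" for \<alpha>'
    proof -
      have g: "G \<alpha>' \<alpha> = (if \<beta> = map (\<lambda>a. l * a) \<alpha>' then (\<Sum>I\<in>{I\<in>tuples m d. wt m I = \<alpha>'}. h \<alpha> I) else 0)" for \<alpha>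
        unfolding G_def by (cases "\<beta> = map (\<lambda>a. l * a) \<alpha>'") (auto intro!: sum.cong sum.neutral)
      have sq: "Sq_coef 1 m d (frob l M) \<alpha>' \<alpha> = (\<Sum>I\<in>{I\<in>tuples m d. wt m I = \<alpha>'}. h \<alpha> I)" for \<alpha>
        unfolding Sq_coef_def frob_def h_def by simp
      show ?thesis
      proof (cases "\<beta> = map (\<lambda>a. l * a) \<alpha>'")
        case True
        show ?thesis unfolding g Sq_map_def sq using True
          by (simp, intro sum.cong refl, simp add: mult.commute)
      next
        case False
        show ?thesis unfolding g Sq_map_def sq using False by simp
      qed
    qed
    have L: "phi l m d (Sq_map 1 n m d (frob l M) x) \<beta>
        = (\<Sum>\<alpha>\<in>comps n d. x \<alpha> * (\<Sum>I\<in>tuples m d. if map (\<lambda>a. l * a) (wt m I) = \<beta> then h \<alpha> I else 0))"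
    proof -
      have "phi l m d (Sq_map 1 n m d (frob l M) x) \<beta> = (\<Sum>\<alpha>'\<in>comps m d. \<Sum>\<alpha>\<in>comps n d. x \<alpha> * G \<alpha>' \<alpha>)"
        unfolding phi_def using step1 by simp
      also have "\<dots> = (\<Sum>\<alpha>\<in>comps n d. x \<alpha> * (\<Sum>\<alpha>'\<in>comps m d. G \<alpha>' \<alpha>))"
        by (subst sum.swap) (simp add: sum_distrib_left)
      also have "\<dots> = (\<Sum>\<alpha>\<in>comps n d. x \<alpha> * (\<Sum>I\<in>tuples m d. if map (\<lambda>a. l * a) (wt m I) = \<beta> then h \<alpha> I else 0))"
      proof (rule sum.cong[OF refl])
        fix \<alpha>
        have "(\<Sum>\<alpha>'\<in>comps m d. G \<alpha>' \<alpha>) = (\<Sum>I\<in>tuples m d. if map (\<lambda>a. l * a) (wt m I) = \<beta> then h \<alpha> I else 0)"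
          unfolding G_def by (rule sum.group) (auto simp: wt_comps)
        then show "x \<alpha> * (\<Sum>\<alpha>'\<in>comps m d. G \<alpha>' \<alpha>) = x \<alpha> * (\<Sum>I\<in>tuples m d. if map (\<lambda>a. l * a) (wt m I) = \<beta> then h \<alpha> I else 0)"
          by simp
      qed
      finally show ?thesis .
    qed
    have R: "Sq_map q n m (d * l) M (phi l n d x) \<beta>
        = (\<Sum>\<alpha>\<in>comps n d. x \<alpha> * Sq_coef q m (d * l) M \<beta> (map (\<lambda>a. l * a) \<alpha>))"
    proof -
      have "Sq_map q n m (d * l) M (phi l n d x) \<beta>
          = (\<Sum>\<gamma>\<in>comps n (d * l). \<Sum>\<alpha>\<in>comps n d. if \<gamma> = map (\<lambda>a. l * a) \<alpha> then x \<alpha> * Sq_coef q m (d * l) M \<beta> \<gamma> else 0)"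
        unfolding Sq_map_def phi_def sum_distrib_left by (intro sum.cong refl) (simp add: mult.commute)
      also have "\<dots> = (\<Sum>\<alpha>\<in>comps n d. \<Sum>\<gamma>\<in>comps n (d * l). if \<gamma> = map (\<lambda>a. l * a) \<alpha> then x \<alpha> * Sq_coef q m (d * l) M \<beta> \<gamma> else 0)"
        by (rule sum.swap)
      also have "\<dots> = (\<Sum>\<alpha>\<in>comps n d. x \<alpha> * Sq_coef q m (d * l) M \<beta> (map (\<lambda>a. l * a) \<alpha>))"
        by (rule sum.cong[OF refl]) (simp add: sum.delta map_mult_comps)
      finally show ?thesis .
    qed
    show "phi l m d (Sq_map 1 n m d (frob l M) x) \<beta> = Sq_map q n m (d * l) M (phi l n d x) \<beta>"
      unfolding L R h_def
      by (rule sum.cong[OF refl]) (simp add: sq_coef_eq[OF assms(1) assms(3) assms(2) H])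
  qed
next
  fix n
  show "inj_on (phi l n d :: (nat list \<Rightarrow> 'k) \<Rightarrow> _) {x. \<forall>\<alpha>. \<alpha> \<notin> comps n d \<longrightarrow> x \<alpha> = 0}"
  proof (rule inj_onI, rule ext)
    fix x y :: "nat list \<Rightarrow> 'k" and \<alpha>
    assume x: "x \<in> {x. \<forall>\<alpha>. \<alpha> \<notin> comps n d \<longrightarrow> x \<alpha> = 0}" and y: "y \<in> {x. \<forall>\<alpha>. \<alpha> \<notin> comps n d \<longrightarrow> x \<alpha> = 0}"
      and e: "phi l n d x = phi l n d y"
    show "x \<alpha> = y \<alpha>"
    proof (cases "\<alpha> \<in> comps n d")
      case True
      have inj: "inj (\<lambda>a::nat. l * a)" using assms(2) by (auto simp: inj_on_def)
      have ph: "phi l n d z (map (\<lambda>a. l * a) \<alpha>) = z \<alpha>" for z :: "nat list \<Rightarrow> 'k"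
      proof -
        have "phi l n d z (map (\<lambda>a. l * a) \<alpha>) = (\<Sum>\<alpha>'\<in>comps n d. if \<alpha> = \<alpha>' then z \<alpha>' else 0)"
          unfolding phi_def using inj by (intro sum.cong refl) (simp add: inj_map_eq_map)
        also have "\<dots> = z \<alpha>" using True by (simp add: sum.delta)
        finally show ?thesis .
      qed
      show ?thesis using ph[of x] ph[of y] e by simp
    next
      case False
      then show ?thesis using x y by simp
    qed
  qed
qed


end
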